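(* There is a signature $\tau$ and a first-order sentence $\varphi$ over $\tau$ such that $\varphi$ is preserved under globally-homomorphic preimages in the finite (for all finite $\tau$-structures $\mathcal{A},\mathcal{B}$, if $\mathcal{A}\Rightarrow\mathcal{B}$ and $\mathcal{B}\models\varphi$ then $\mathcal{A}\models\varphi$), but $\varphi$ is not equivalent over finite structures to any finite set of generalized dependencies.
   Context: Signatures are relational (constant and relation symbols). A generalized dependency (GD) is a sentence $\forall\vec{x}(\phi(\vec{x})\rightarrow\exists\vec{y}(\psi_1\vee\cdots\vee\psi_n))$, $n\ge0$, with $\phi,\psi_i$ conjunctions of atomic formulas (equalities allowed; for $n=0$ the head is $\bot$). For $a_1,\dots,a_k\in A$, $(\mathcal{A},a_1,\dots,a_k)$ is the expansion interpreting fresh constant symbols as $a_1,\dots,a_k$. $\mathcal{A}\rightleftarrows\mathcal{B}$ means there are homomorphisms (maps preserving constants and relations) in both directions. $\mathcal{A}\Rightarrow\mathcal{B}$ means there is a function $\pi$ mapping every finite tuple $\vec a$ over $A$ to a tuple $\pi(\vec a)$ over $B$ of the same length with $(\mathcal{A},\vec{a})\rightleftarrows(\mathcal{B},\pi(\vec{a}))$. "Equivalent over finite structures" means having the same finite models. *)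

theory Defs
  imports Main
begin

text \<open>Relation symbols are pairs (name, arity); constant symbols are naturals.\<close>
record sig =
  cnsts :: "nat set"
  rels  :: "(nat \<times> nat) set"

record 'a strc =
  dom  :: "'a set"
  cint :: "nat \<Rightarrow> 'a"
  rint :: "nat \<times> nat \<Rightarrow> 'a list set"

definition is_struct :: "sig \<Rightarrow> 'a strc \<Rightarrow> bool" where
  "is_struct \<tau> A \<longleftrightarrow> dom A \<noteq> {}
     \<and> (\<forall>c\<in>cnsts \<tau>. cint A c \<in> dom A)
     \<and> (\<forall>R\<in>rels \<tau>. \<forall>t\<in>rint A R. length t = snd R \<and> set t \<subseteq> dom A)"

datatype trm = Var nat | Cst nat

datatype fm = FTrue | FFalse | Eq trm trm | Rel "nat \<times> nat" "trm list"
  | Neg fm | Conj fm fm | Disj fm fm | Imp fm fm | Ex nat fm | All nat fm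

fun eval :: "'a strc \<Rightarrow> (nat \<Rightarrow> 'a) \<Rightarrow> trm \<Rightarrow> 'a" where
  "eval A v (Var x) = v x"
| "eval A v (Cst c) = cint A c"

fun sat :: "'a strc \<Rightarrow> (nat \<Rightarrow> 'a) \<Rightarrow> fm \<Rightarrow> bool" where
  "sat A v FTrue = True"
| "sat A v FFalse = False"
| "sat A v (Eq s t) = (eval A v s = eval A v t)"
| "sat A v (Rel R ts) = (map (eval A v) ts \<in> rint A R)"
| "sat A v (Neg p) = (\<not> sat A v p)"
| "sat A v (Conj p q) = (sat A v p \<and> sat A v q)"
| "sat A v (Disj p q) = (sat A v p \<or> sat A v q)"
| "sat A v (Imp p q) = (sat A v p \<longrightarrow> sat A v q)"
| "sat A v (Ex x p) = (\<exists>a\<in>dom A. sat A (v(x := a)) p)"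
| "sat A v (All x p) = (\<forall>a\<in>dom A. sat A (v(x := a)) p)"

fun tvars :: "trm \<Rightarrow> nat set" where
  "tvars (Var x) = {x}"
| "tvars (Cst c) = {}"

fun fv :: "fm \<Rightarrow> nat set" where
  "fv FTrue = {}"
| "fv FFalse = {}"
| "fv (Eq s t) = tvars s \<union> tvars t"
| "fv (Rel R ts) = \<Union> (tvars ` set ts)"
| "fv (Neg p) = fv p"
| "fv (Conj p q) = fv p \<union> fv q"
| "fv (Disj p q) = fv p \<union> fv q"
| "fv (Imp p q) = fv p \<union> fv q"
| "fv (Ex x p) = fv p - {x}"
| "fv (All x p) = fv p - {x}"

fun wf_trm :: "sig \<Rightarrow> trm \<Rightarrow> bool" where
  "wf_trm \<tau> (Var x) = True"
| "wf_trm \<tau> (Cst c) = (c \<in> cnsts \<tau>)"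

fun wf_fm :: "sig \<Rightarrow> fm \<Rightarrow> bool" where
  "wf_fm \<tau> FTrue = True"
| "wf_fm \<tau> FFalse = True"
| "wf_fm \<tau> (Eq s t) = (wf_trm \<tau> s \<and> wf_trm \<tau> t)"
| "wf_fm \<tau> (Rel R ts) = (R \<in> rels \<tau> \<and> length ts = snd R \<and> (\<forall>t\<in>set ts. wf_trm \<tau> t))"
| "wf_fm \<tau> (Neg p) = wf_fm \<tau> p"
| "wf_fm \<tau> (Conj p q) = (wf_fm \<tau> p \<and> wf_fm \<tau> q)"
| "wf_fm \<tau> (Disj p q) = (wf_fm \<tau> p \<and> wf_fm \<tau> q)"
| "wf_fm \<tau> (Imp p q) = (wf_fm \<tau> p \<and> wf_fm \<tau> q)"
| "wf_fm \<tau> (Ex x p) = wf_fm \<tau> p"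
| "wf_fm \<tau> (All x p) = wf_fm \<tau> p"

definition sentence :: "sig \<Rightarrow> fm \<Rightarrow> bool" where
  "sentence \<tau> \<phi> \<longleftrightarrow> wf_fm \<tau> \<phi> \<and> fv \<phi> = {}"

definition models :: "'a strc \<Rightarrow> fm \<Rightarrow> bool" where
  "models A \<phi> \<longleftrightarrow> (\<forall>v. sat A v \<phi>)"

fun is_atom :: "fm \<Rightarrow> bool" where
  "is_atom (Eq s t) = True"
| "is_atom (Rel R ts) = True"
| "is_atom _ = False"

fun conjs :: "fm list \<Rightarrow> fm" where
  "conjs [] = FTrue"
| "conjs (p # ps) = Conj p (conjs ps)"

fun disjs :: "fm list \<Rightarrow> fm" where
  "disjs [] = FFalse"
| "disjs (p # ps) = Disj p (disjs ps)"

text \<open>A GD: \<forall>xs (body \<longrightarrow> \<exists>ys (head_1 \<or> ... \<or> head_n)), bodies/heads conjunctions of atoms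
  (equalities allowed); n = 0 gives head \<bottom>.\<close>
definition is_gd :: "sig \<Rightarrow> fm \<Rightarrow> bool" where
  "is_gd \<tau> \<gamma> \<longleftrightarrow> sentence \<tau> \<gamma> \<and>
     (\<exists>xs body ys heads.
        (\<forall>a\<in>set body. is_atom a) \<and> (\<forall>h\<in>set heads. \<forall>a\<in>set h. is_atom a) \<and>
        \<gamma> = foldr All xs (Imp (conjs body) (foldr Ex ys (disjs (map conjs heads)))))"

text \<open>(A, as) \<rightarrow> (B, bs): a homomorphism A \<rightarrow> B (preserving constants and relations of \<tau>)
  that also maps the tuple as to bs (interpretations of the fresh constants).\<close>
definition hom_exp :: "sig \<Rightarrow> 'a strc \<Rightarrow> 'a list \<Rightarrow> 'b strc \<Rightarrow> 'b list \<Rightarrow> bool" where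
  "hom_exp \<tau> A as B bs \<longleftrightarrow> (\<exists>h.
      (\<forall>a\<in>dom A. h a \<in> dom B)
    \<and> (\<forall>c\<in>cnsts \<tau>. h (cint A c) = cint B c)
    \<and> (\<forall>R\<in>rels \<tau>. \<forall>t\<in>rint A R. map h t \<in> rint B R)
    \<and> map h as = bs)"

definition glob_hom :: "sig \<Rightarrow> 'a strc \<Rightarrow> 'b strc \<Rightarrow> bool" where
  "glob_hom \<tau> A B \<longleftrightarrow> (\<exists>\<pi>. \<forall>as. set as \<subseteq> dom A \<longrightarrow>
      length (\<pi> as) = length as \<and> set (\<pi> as) \<subseteq> dom B
      \<and> hom_exp \<tau> A as B (\<pi> as) \<and> hom_exp \<tau> B (\<pi> as) A as)"

end

theory Submission imports Defs begin


definition is_hom :: "sig \<Rightarrow> 'a strc \<Rightarrow> 'b strc \<Rightarrow> ('a \<Rightarrow> 'b) \<Rightarrow> bool" where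
 "is_hom \<tau> A B h \<longleftrightarrow> (\<forall>a\<in>dom A. h a \<in> dom B) \<and> (\<forall>c\<in>cnsts \<tau>. h (cint A c) = cint B c)
    \<and> (\<forall>R\<in>rels \<tau>. \<forall>t\<in>rint A R. map h t \<in> rint B R)"

lemma hom_exp_iff: "hom_exp \<tau> A as B bs \<longleftrightarrow> (\<exists>h. is_hom \<tau> A B h \<and> map h as = bs)"
  by (simp add: hom_exp_def is_hom_def)

fun pos :: "fm \<Rightarrow> bool" where
  "pos FTrue = True" | "pos FFalse = True" | "pos (Eq s t) = True" | "pos (Rel R ts) = True"
| "pos (Conj p q) = (pos p \<and> pos q)" | "pos (Disj p q) = (pos p \<and> pos q)" | "pos (Ex x p) = pos p"
| "pos (Neg p) = False" | "pos (Imp p q) = False" | "pos (All x p) = False"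

lemma eval_hom:
  assumes "wf_trm \<tau> t" "\<forall>c\<in>cnsts \<tau>. h (cint A c) = cint B c"
  shows "eval B (h \<circ> v) t = h (eval A v t)"
  using assms by (cases t) auto

lemma pos_pres:
  assumes "is_hom \<tau> A B h" shows "pos p \<Longrightarrow> wf_fm \<tau> p \<Longrightarrow> sat A v p \<Longrightarrow> sat B (h \<circ> v) p"
proof (induction p arbitrary: v)
  case (Eq s t)
  have c: "\<forall>c\<in>cnsts \<tau>. h (cint A c) = cint B c" using assms by (simp add: is_hom_def)
  have "eval B (h \<circ> v) s = h (eval A v s)" by (rule eval_hom[OF _ c]) (use Eq in simp)
  moreover have "eval B (h \<circ> v) t = h (eval A v t)" by (rule eval_hom[OF _ c]) (use Eq in simp)
  ultimately show ?case using Eq by (simp only: sat.simps)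
next
  case (Rel R ts)
  have c: "\<forall>c\<in>cnsts \<tau>. h (cint A c) = cint B c" using assms by (simp add: is_hom_def)
  have e: "map (eval B (h \<circ> v)) ts = map h (map (eval A v) ts)"
    unfolding map_map using Rel eval_hom[OF _ c] by (auto intro!: map_cong)
  have "map h (map (eval A v) ts) \<in> rint B R" using Rel assms unfolding is_hom_def by (simp del: map_map)
  then show ?case by (simp only: sat.simps e)
next
  case (Ex x p)
  then obtain a where a: "a \<in> dom A" "sat A (v(x:=a)) p" by auto
  have "sat B (h \<circ> (v(x:=a))) p" proof (rule Ex.IH)
    show "pos p" "wf_fm \<tau> p" using Ex.prems by auto
  qed (rule a(2))
  moreover have "h \<circ> (v(x:=a)) = (h \<circ> v)(x := h a)" by auto
  ultimately have s: "sat B ((h \<circ> v)(x := h a)) p" by simp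
  have hd: "h a \<in> dom B" using a assms by (auto simp: is_hom_def)
  show ?case unfolding sat.simps using hd s by blast
qed auto

lemma eval_cong: "(\<forall>x\<in>tvars t. v x = w x) \<Longrightarrow> eval A v t = eval A w t" by (cases t) auto

lemma sat_cong: "(\<forall>x\<in>fv p. v x = w x) \<Longrightarrow> sat A v p = sat A w p"
proof (induction p arbitrary: v w)
  case (Rel R ts)
  have e: "map (eval A v) ts = map (eval A w) ts" using Rel by (auto intro!: map_cong eval_cong)
  show ?case by (simp only: sat.simps e)
next
  case (Ex x p)
  have "\<And>a. sat A (v(x:=a)) p = sat A (w(x:=a)) p" by (rule Ex.IH) (use Ex.prems in auto)
  then show ?case by simp
next
  case (All x p)
  have "\<And>a. sat A (v(x:=a)) p = sat A (w(x:=a)) p" by (rule All.IH) (use All.prems in auto)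
  then show ?case by simp
next
  case (Eq s t)
  have "eval A v s = eval A w s" "eval A v t = eval A w t" by (rule eval_cong, use Eq in auto)+
  then show ?case by (simp only: sat.simps)
next
  case (Neg p)
  have "sat A v p = sat A w p" by (rule Neg.IH) (use Neg.prems in auto)
  then show ?case by simp
next
  case (Conj p q)
  have "sat A v p = sat A w p" by (rule Conj.IH(1)) (use Conj.prems in auto)
  moreover have "sat A v q = sat A w q" by (rule Conj.IH(2)) (use Conj.prems in auto)
  ultimately show ?case by simp
next
  case (Disj p q)
  have "sat A v p = sat A w p" by (rule Disj.IH(1)) (use Disj.prems in auto)
  moreover have "sat A v q = sat A w q" by (rule Disj.IH(2)) (use Disj.prems in auto)
  ultimately show ?case by simp
next
  case (Imp p q)
  have "sat A v p = sat A w p" by (rule Imp.IH(1)) (use Imp.prems in auto)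
  moreover have "sat A v q = sat A w q" by (rule Imp.IH(2)) (use Imp.prems in auto)
  ultimately show ?case by simp
qed auto

lemma fv_foldr_All: "fv (foldr All xs Q) = fv Q - set xs" by (induction xs) auto
lemma wf_foldr_All: "wf_fm \<tau> (foldr All xs Q) = wf_fm \<tau> Q" by (induction xs) auto
lemma wf_foldr_Ex: "wf_fm \<tau> (foldr Ex xs Q) = wf_fm \<tau> Q" by (induction xs) auto
lemma pos_foldr_Ex: "pos (foldr Ex xs Q) = pos Q" by (induction xs) auto
lemma pos_atom: "is_atom a \<Longrightarrow> pos a" by (cases a) auto
lemma pos_conjs: "\<forall>a\<in>set l. is_atom a \<Longrightarrow> pos (conjs l)" by (induction l) (auto simp: pos_atom)
lemma pos_conjs2: "\<forall>a\<in>set l. pos a \<Longrightarrow> pos (conjs l)" by (induction l) auto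
lemma pos_disjs: "\<forall>a\<in>set l. pos a \<Longrightarrow> pos (disjs l)" by (induction l) auto
lemma wf_conjs: "wf_fm \<tau> (conjs l) = (\<forall>a\<in>set l. wf_fm \<tau> a)" by (induction l) auto
lemma wf_disjs: "wf_fm \<tau> (disjs l) = (\<forall>a\<in>set l. wf_fm \<tau> a)" by (induction l) auto

lemma all_intro: "(\<And>w. (\<forall>y. y \<notin> set xs \<longrightarrow> w y = v y) \<Longrightarrow> (\<forall>y\<in>set xs. w y \<in> dom A) \<Longrightarrow> sat A w Q)
   \<Longrightarrow> sat A v (foldr All xs Q)"
proof (induction xs arbitrary: v)
  case Nil then show ?case by auto
next
  case (Cons x xs)
  show ?case
  proof (simp, intro ballI)
    fix a assume a: "a \<in> dom A"
    show "sat A (v(x:=a)) (foldr All xs Q)"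
    proof (rule Cons.IH)
      fix w assume w1: "\<forall>y. y \<notin> set xs \<longrightarrow> w y = (v(x:=a)) y" and w2: "\<forall>y\<in>set xs. w y \<in> dom A"
      show "sat A w Q"
      proof (rule Cons.prems)
        show "\<forall>y. y \<notin> set (x#xs) \<longrightarrow> w y = v y" using w1 by auto
        show "\<forall>y\<in>set (x#xs). w y \<in> dom A" using w1 w2 a by (cases "x \<in> set xs") auto
      qed
    qed
  qed
qed

lemma all_elim: "sat A v (foldr All xs Q) \<Longrightarrow> \<forall>y\<in>set xs. v y \<in> dom A \<Longrightarrow> sat A v Q"
proof (induction xs)
  case (Cons x xs)
  then have "sat A (v(x := v x)) (foldr All xs Q)" by auto
  then show ?case using Cons by simp
qed auto

lemma map_map_id: "map g (map f as) = as \<Longrightarrow> x \<in> set as \<Longrightarrow> g (f x) = x"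
  by (induction as) auto

definition loc :: "sig \<Rightarrow> 'a strc \<Rightarrow> 'b strc \<Rightarrow> nat \<Rightarrow> bool" where
 "loc \<tau> A B n \<longleftrightarrow> (\<forall>as. set as \<subseteq> dom A \<and> length as \<le> n \<longrightarrow> (\<exists>bs. hom_exp \<tau> A as B bs \<and> hom_exp \<tau> B bs A as))"

lemma gd_pres:
  assumes sen: "sentence \<tau> \<gamma>" and at1: "\<forall>a\<in>set body. is_atom a" and at2: "\<forall>h\<in>set heads. \<forall>a\<in>set h. is_atom a"
   and geq: "\<gamma> = foldr All xs (Imp (conjs body) (foldr Ex ys (disjs (map conjs heads))))"
   and len: "length xs \<le> n" and lc: "loc \<tau> A B n" and mB: "models B \<gamma>"
  shows "models A \<gamma>"
proof -
  define Bd where "Bd = conjs body"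
  define H where "H = foldr Ex ys (disjs (map conjs heads))"
  have wf: "wf_fm \<tau> Bd" "wf_fm \<tau> H" using sen geq unfolding sentence_def Bd_def H_def
    by (auto simp: wf_foldr_All)
  have fvH: "fv H \<subseteq> set xs" using sen geq unfolding sentence_def H_def by (auto simp: fv_foldr_All)
  have pB: "pos Bd" using at1 by (simp add: Bd_def pos_conjs)
  have pH: "pos H" unfolding H_def pos_foldr_Ex using at2 by (auto intro!: pos_disjs pos_conjs)
  show ?thesis unfolding models_def
  proof
    fix v
    show "sat A v \<gamma>" unfolding geq Bd_def[symmetric] H_def[symmetric]
    proof (rule all_intro)
      fix w assume w2: "\<forall>y\<in>set xs. w y \<in> dom A"
      show "sat A w (Imp Bd H)"
      proof (simp, intro impI)
        assume sBd: "sat A w Bd"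
        define as where "as = map w xs"
        have "set as \<subseteq> dom A" "length as \<le> n" using w2 len by (auto simp: as_def)
        then obtain bs where "hom_exp \<tau> A as B bs" "hom_exp \<tau> B bs A as" using lc by (auto simp: loc_def)
        then obtain f g where f: "is_hom \<tau> A B f" "map f as = bs" and g: "is_hom \<tau> B A g" "map g bs = as"
          by (auto simp: hom_exp_iff)
        have s1: "sat B (f \<circ> w) Bd" using pos_pres[OF f(1) pB wf(1) sBd] .
        have "sat B (f \<circ> w) \<gamma>" using mB by (simp add: models_def)
        then have "sat B (f \<circ> w) (Imp Bd H)" unfolding geq Bd_def[symmetric] H_def[symmetric]
          by (rule all_elim) (use w2 f(1) in \<open>auto simp: is_hom_def\<close>)
        then have "sat B (f \<circ> w) H" using s1 by simp
        then have s2: "sat A (g \<circ> (f \<circ> w)) H" using pos_pres[OF g(1) pH wf(2)] by blast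
        have "\<forall>y\<in>fv H. (g \<circ> (f \<circ> w)) y = w y"
        proof
          fix y assume "y \<in> fv H"
          then have "w y \<in> set as" using fvH by (auto simp: as_def)
          then show "(g \<circ> (f \<circ> w)) y = w y" using map_map_id[of g f as] f(2) g(2) by auto
        qed
        then show "sat A w H" using s2 sat_cong by blast
      qed
    qed
  qed
qed



abbreviation lt :: "'a strc \<Rightarrow> 'a \<Rightarrow> 'a \<Rightarrow> bool" where "lt A x y \<equiv> [x,y] \<in> rint A (0,2)"
abbreviation sr :: "'a strc \<Rightarrow> 'a \<Rightarrow> 'a \<Rightarrow> bool" where "sr A x y \<equiv> [x,y] \<in> rint A (1,2)"

definition "G1 A \<longleftrightarrow> (\<exists>u\<in>dom A. \<forall>x\<in>dom A. lt A u x \<and> lt A x u \<and> sr A u x \<and> sr A x u)"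
definition "G2 A \<longleftrightarrow> (\<forall>x\<in>dom A. \<forall>y\<in>dom A. \<not>lt A x x \<longrightarrow> \<not>lt A y y \<longrightarrow> lt A x y \<or> lt A y x \<or> x = y)"
definition "G3 A \<longleftrightarrow> (\<forall>x\<in>dom A. \<forall>y\<in>dom A. \<forall>z\<in>dom A. \<not>lt A x x \<longrightarrow> \<not>lt A y y \<longrightarrow> \<not>lt A z z \<longrightarrow> lt A x y \<longrightarrow> lt A y z \<longrightarrow> lt A x z)"
definition "G4 A \<longleftrightarrow> (\<forall>x\<in>dom A. \<forall>y\<in>dom A. \<forall>z\<in>dom A. \<not>lt A x x \<longrightarrow> \<not>lt A y y \<longrightarrow> \<not>lt A z z \<longrightarrow> sr A x y \<longrightarrow> lt A x y \<and> \<not>(lt A x z \<and> lt A z y))"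
definition "G5 A \<longleftrightarrow> (\<not> lt A (cint A 0) (cint A 0) \<and> \<not> lt A (cint A 1) (cint A 1))"
definition "G6 A \<longleftrightarrow> (\<exists>x\<in>dom A. \<not>lt A x x \<and> (lt A (cint A 0) x \<or> cint A 0 = x) \<and> lt A x (cint A 1) \<and> (\<forall>y\<in>dom A. \<not>lt A y y \<longrightarrow> \<not> sr A x y))"
definition Gsem :: "'a strc \<Rightarrow> bool" where
  "Gsem A \<longleftrightarrow> G1 A \<and> G2 A \<and> G3 A \<and> G4 A \<and> G5 A \<and> G6 A"

definition "L i j = Rel (0,2) [Var i, Var j]"
definition "Sr i j = Rel (1,2) [Var i, Var j]"
definition "Nn i = Neg (L i i)"

definition "GF = Conj (Ex 0 (All 1 (Conj (L 0 1) (Conj (L 1 0) (Conj (Sr 0 1) (Sr 1 0))))))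
 (Conj (All 0 (All 1 (Imp (Nn 0) (Imp (Nn 1) (Disj (L 0 1) (Disj (L 1 0) (Eq (Var 0) (Var 1))))))))
 (Conj (All 0 (All 1 (All 2 (Imp (Nn 0) (Imp (Nn 1) (Imp (Nn 2) (Imp (L 0 1) (Imp (L 1 2) (L 0 2)))))))))
 (Conj (All 0 (All 1 (All 2 (Imp (Nn 0) (Imp (Nn 1) (Imp (Nn 2) (Imp (Sr 0 1) (Conj (L 0 1) (Neg (Conj (L 0 2) (L 2 1)))))))))))
 (Conj (Conj (Neg (Rel (0,2) [Cst 0, Cst 0])) (Neg (Rel (0,2) [Cst 1, Cst 1])))
   (Ex 0 (Conj (Nn 0) (Conj (Disj (Rel (0,2) [Cst 0, Var 0]) (Eq (Cst 0) (Var 0)))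
      (Conj (Rel (0,2) [Var 0, Cst 1]) (All 1 (Imp (Nn 1) (Neg (Sr 0 1))))))))))))"

definition "\<tau>0 = \<lparr>cnsts = {0, 1}, rels = {(0, 2), (1, 2)}\<rparr>"

lemma GF_sem: "models A GF \<longleftrightarrow> Gsem A"
  unfolding models_def GF_def Gsem_def G1_def G2_def G3_def G4_def G5_def G6_def L_def Sr_def Nn_def by simp

lemma GF_sentence: "sentence \<tau>0 GF"
  unfolding sentence_def GF_def L_def Sr_def Nn_def \<tau>0_def by auto



lemma finite_max:
  assumes "finite Y" "Y \<noteq> {}" "\<forall>x\<in>Y. \<not> r x x" "\<forall>x\<in>Y. \<forall>y\<in>Y. \<forall>z\<in>Y. r x y \<longrightarrow> r y z \<longrightarrow> r x z"
  shows "\<exists>a\<in>Y. \<forall>b\<in>Y. \<not> r a b"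
  using assms
proof (induction Y rule: finite_ne_induct)
  case (singleton x) show ?case using singleton.prems(1) by simp
next
  case (insert x F)
  have i1: "\<forall>x\<in>F. \<not> r x x" using insert.prems(1) by simp
  have i2: "\<forall>x\<in>F. \<forall>y\<in>F. \<forall>z\<in>F. r x y \<longrightarrow> r y z \<longrightarrow> r x z" using insert.prems(2) by blast
  obtain m where m: "m \<in> F" "\<forall>b\<in>F. \<not> r m b" using insert.IH[OF i1 i2] by blast
  show ?case
  proof (cases "r m x")
    case True
    have "\<forall>b\<in>insert x F. \<not> r x b"
    proof
      fix b assume b: "b \<in> insert x F"
      show "\<not> r x b"
      proof
        assume rxb: "r x b"
        show False
        proof (cases "b = x")
          case True then show False using rxb insert.prems(1) by simp
        next
          case False
          then have "b \<in> F" using b by simp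
          have mI: "m \<in> insert x F" using m(1) by simp
          have bI: "b \<in> insert x F" using b by simp
          have "r m b" using insert.prems(2)[rule_format, OF mI _ bI, of x] True rxb by simp
          then show False using m(2) \<open>b \<in> F\<close> by simp
        qed
      qed
    qed
    then show ?thesis by blast
  next
    case False
    have "\<forall>b\<in>insert x F. \<not> r m b" using m(2) False by simp
    then show ?thesis using m(1) by blast
  qed
qed

lemma pres:
  assumes A: "is_struct \<tau>0 A" "finite (dom A)" and B: "is_struct \<tau>0 B"
    and gh: "glob_hom \<tau>0 A B" and GB: "Gsem B"
  shows "Gsem A"
proof -
  obtain \<pi> where \<pi>: "\<forall>as. set as \<subseteq> dom A \<longrightarrow> hom_exp \<tau>0 A as B (\<pi> as) \<and> hom_exp \<tau>0 B (\<pi> as) A as"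
    using gh unfolding glob_hom_def by blast
  obtain as where setas: "set as = dom A" using A(2) finite_list by blast
  have he: "hom_exp \<tau>0 A as B (\<pi> as)" "hom_exp \<tau>0 B (\<pi> as) A as" using \<pi> setas by auto
  obtain f where f: "is_hom \<tau>0 A B f" "map f as = \<pi> as" using he(1) unfolding hom_exp_iff by blast
  obtain g where g: "is_hom \<tau>0 B A g" "map g (\<pi> as) = as" using he(2) unfolding hom_exp_iff by blast
  have gf: "\<And>x. x \<in> dom A \<Longrightarrow> g (f x) = x"
  proof -
    fix x assume "x \<in> dom A"
    then have "x \<in> set as" using setas by simp
    moreover have "map g (map f as) = as" using f(2) g(2) by simp
    ultimately show "g (f x) = x" using map_map_id by metis
  qed
  have fd: "\<And>x. x \<in> dom A \<Longrightarrow> f x \<in> dom B" using f(1) unfolding is_hom_def by blast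
  have gd: "\<And>x. x \<in> dom B \<Longrightarrow> g x \<in> dom A" using g(1) unfolding is_hom_def by blast
  have fC: "\<forall>c\<in>cnsts \<tau>0. f (cint A c) = cint B c" using f(1) unfolding is_hom_def by blast
  have fc0: "f (cint A 0) = cint B 0" and fc1: "f (cint A 1) = cint B 1"
    using fC by (simp_all add: \<tau>0_def)
  have aC: "\<forall>c\<in>cnsts \<tau>0. cint A c \<in> dom A" using A(1) unfolding is_struct_def by blast
  have cA: "cint A 0 \<in> dom A" "cint A 1 \<in> dom A" using aC by (simp_all add: \<tau>0_def)
  have fR: "\<forall>R\<in>rels \<tau>0. \<forall>t\<in>rint A R. map f t \<in> rint B R" using f(1) unfolding is_hom_def by blast
  have gR: "\<forall>R\<in>rels \<tau>0. \<forall>t\<in>rint B R. map g t \<in> rint A R" using g(1) unfolding is_hom_def by blast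
  have r0: "(0::nat,2::nat) \<in> rels \<tau>0" and r1: "(1::nat,2::nat) \<in> rels \<tau>0" by (simp_all add: \<tau>0_def)
  have flt: "\<And>x y. lt A x y \<Longrightarrow> lt B (f x) (f y)" using fR[rule_format, OF r0] by fastforce
  have fsr: "\<And>x y. sr A x y \<Longrightarrow> sr B (f x) (f y)" using fR[rule_format, OF r1] by fastforce
  have glt: "\<And>x y. lt B x y \<Longrightarrow> lt A (g x) (g y)" using gR[rule_format, OF r0] by fastforce
  have gsr: "\<And>x y. sr B x y \<Longrightarrow> sr A (g x) (g y)" using gR[rule_format, OF r1] by fastforce
  have ltiff: "\<And>x y. x \<in> dom A \<Longrightarrow> y \<in> dom A \<Longrightarrow> lt B (f x) (f y) \<longleftrightarrow> lt A x y"
  proof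
    fix x y assume "x \<in> dom A" "y \<in> dom A" "lt B (f x) (f y)"
    then show "lt A x y" using glt[of "f x" "f y"] gf by simp
  qed (rule flt)
  have sriff: "\<And>x y. x \<in> dom A \<Longrightarrow> y \<in> dom A \<Longrightarrow> sr B (f x) (f y) \<longleftrightarrow> sr A x y"
  proof
    fix x y assume "x \<in> dom A" "y \<in> dom A" "sr B (f x) (f y)"
    then show "sr A x y" using gsr[of "f x" "f y"] gf by simp
  qed (rule fsr)
  have eqinj: "\<And>x y. x \<in> dom A \<Longrightarrow> y \<in> dom A \<Longrightarrow> f x = f y \<Longrightarrow> x = y"
    by (metis gf)
  have GBs: "G1 B" "G2 B" "G3 B" "G4 B" "G5 B" "G6 B" using GB unfolding Gsem_def by blast+
  obtain u where u: "u \<in> dom B" "\<forall>x\<in>dom B. lt B u x \<and> lt B x u \<and> sr B u x \<and> sr B x u"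
    using GBs(1) unfolding G1_def by blast
  have lin: "\<forall>x\<in>dom B. \<forall>y\<in>dom B. \<not>lt B x x \<longrightarrow> \<not>lt B y y \<longrightarrow> lt B x y \<or> lt B y x \<or> x = y"
    using GBs(2) unfolding G2_def by blast
  have tr: "\<forall>x\<in>dom B. \<forall>y\<in>dom B. \<forall>z\<in>dom B. \<not>lt B x x \<longrightarrow> \<not>lt B y y \<longrightarrow> \<not>lt B z z \<longrightarrow> lt B x y \<longrightarrow> lt B y z \<longrightarrow> lt B x z"
    using GBs(3) unfolding G3_def by blast
  have sc: "\<forall>x\<in>dom B. \<forall>y\<in>dom B. \<forall>z\<in>dom B. \<not>lt B x x \<longrightarrow> \<not>lt B y y \<longrightarrow> \<not>lt B z z \<longrightarrow> sr B x y \<longrightarrow> lt B x y \<and> \<not>(lt B x z \<and> lt B z y)"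
    using GBs(4) unfolding G4_def by blast
  have cs: "\<not> lt B (cint B 0) (cint B 0)" "\<not> lt B (cint B 1) (cint B 1)"
    using GBs(5) unfolding G5_def by blast+
  obtain xb where xb: "xb \<in> dom B" "\<not>lt B xb xb" "lt B (cint B 0) xb \<or> cint B 0 = xb" "lt B xb (cint B 1)"
     "\<forall>y\<in>dom B. \<not>lt B y y \<longrightarrow> \<not> sr B xb y"
    using GBs(6) unfolding G6_def by blast
  have p1: "G1 A" unfolding G1_def
  proof (intro bexI ballI)
    fix x assume x: "x \<in> dom A"
    have "lt B u (f x) \<and> lt B (f x) u \<and> sr B u (f x) \<and> sr B (f x) u" using u fd x by blast
    then show "lt A (g u) x \<and> lt A x (g u) \<and> sr A (g u) x \<and> sr A x (g u)"
      using glt[of u "f x"] glt[of "f x" u] gsr[of u "f x"] gsr[of "f x" u] gf[OF x] by auto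
  qed (use gd u in auto)
  have p2: "\<forall>x\<in>dom A. \<forall>y\<in>dom A. \<not>lt A x x \<longrightarrow> \<not>lt A y y \<longrightarrow> lt A x y \<or> lt A y x \<or> x = y"
  proof (intro ballI impI)
    fix x y assume xy: "x \<in> dom A" "y \<in> dom A" "\<not>lt A x x" "\<not>lt A y y"
    then have "\<not>lt B (f x) (f x)" "\<not>lt B (f y) (f y)" using ltiff by auto
    then have "lt B (f x) (f y) \<or> lt B (f y) (f x) \<or> f x = f y" using lin[rule_format, OF fd[OF xy(1)] fd[OF xy(2)]] by blast
    then show "lt A x y \<or> lt A y x \<or> x = y" using ltiff[OF xy(1,2)] ltiff[OF xy(2,1)] eqinj[OF xy(1,2)] by auto
  qed
  have p3: "\<forall>x\<in>dom A. \<forall>y\<in>dom A. \<forall>z\<in>dom A. \<not>lt A x x \<longrightarrow> \<not>lt A y y \<longrightarrow> \<not>lt A z z \<longrightarrow> lt A x y \<longrightarrow> lt A y z \<longrightarrow> lt A x z"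
  proof (intro ballI impI)
    fix x y z assume xy: "x \<in> dom A" "y \<in> dom A" "z \<in> dom A" "\<not>lt A x x" "\<not>lt A y y" "\<not>lt A z z"
       "lt A x y" "lt A y z"
    then have "\<not>lt B (f x) (f x)" "\<not>lt B (f y) (f y)" "\<not>lt B (f z) (f z)" "lt B (f x) (f y)" "lt B (f y) (f z)"
      using ltiff by auto
    then have "lt B (f x) (f z)" using tr[rule_format, OF fd[OF xy(1)] fd[OF xy(2)] fd[OF xy(3)]] by blast
    then show "lt A x z" using ltiff[OF xy(1,3)] by simp
  qed
  have p4: "\<forall>x\<in>dom A. \<forall>y\<in>dom A. \<forall>z\<in>dom A. \<not>lt A x x \<longrightarrow> \<not>lt A y y \<longrightarrow> \<not>lt A z z \<longrightarrow> sr A x y \<longrightarrow> lt A x y \<and> \<not>(lt A x z \<and> lt A z y)"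
  proof (intro ballI impI)
    fix x y z assume xy: "x \<in> dom A" "y \<in> dom A" "z \<in> dom A" "\<not>lt A x x" "\<not>lt A y y" "\<not>lt A z z"
       "sr A x y"
    then have "\<not>lt B (f x) (f x)" "\<not>lt B (f y) (f y)" "\<not>lt B (f z) (f z)" "sr B (f x) (f y)"
      using ltiff sriff by auto
    then have "lt B (f x) (f y) \<and> \<not>(lt B (f x) (f z) \<and> lt B (f z) (f y))" using sc[rule_format, OF fd[OF xy(1)] fd[OF xy(2)] fd[OF xy(3)]] by blast
    then show "lt A x y \<and> \<not>(lt A x z \<and> lt A z y)" using ltiff[OF xy(1,2)] ltiff[OF xy(1,3)] ltiff[OF xy(3,2)] by simp
  qed
  have p5: "\<not> lt A (cint A 0) (cint A 0) \<and> \<not> lt A (cint A 1) (cint A 1)"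
    using cs flt[of "cint A 0" "cint A 0"] flt[of "cint A 1" "cint A 1"] fc0 fc1 by auto
  have p6: "\<exists>x\<in>dom A. \<not>lt A x x \<and> (lt A (cint A 0) x \<or> cint A 0 = x) \<and> lt A x (cint A 1) \<and> (\<forall>y\<in>dom A. \<not>lt A y y \<longrightarrow> \<not> sr A x y)"
  proof (rule ccontr)
    assume H: "\<not> ?thesis"
    define Y where "Y = {a\<in>dom A. \<not>lt A a a \<and> (lt A (cint A 0) a \<or> cint A 0 = a) \<and> (lt B (f a) xb \<or> f a = xb)}"
    have c0Y: "cint A 0 \<in> Y" using cA p5 xb(3) fc0 unfolding Y_def by auto
    have "finite Y" using A(2) unfolding Y_def by auto
    moreover have "\<forall>x\<in>Y. \<forall>y\<in>Y. \<forall>z\<in>Y. lt A x y \<longrightarrow> lt A y z \<longrightarrow> lt A x z"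
      using p3 unfolding Y_def by blast
    moreover have "\<forall>x\<in>Y. \<not> lt A x x" unfolding Y_def by blast
    ultimately obtain a where a: "a \<in> Y" "\<forall>b\<in>Y. \<not> lt A a b" using finite_max[of Y "lt A"] c0Y by blast
    have aA: "a \<in> dom A" "\<not>lt A a a" "lt A (cint A 0) a \<or> cint A 0 = a" "lt B (f a) xb \<or> f a = xb"
      using a(1) unfolding Y_def by auto
    have nfa: "\<not> lt B (f a) (f a)" using aA(2) ltiff[OF aA(1) aA(1)] by simp
    have "lt B (f a) (cint B 1)"
    proof (cases "f a = xb")
      case True then show ?thesis using xb(4) by simp
    next
      case False
      then have lx: "lt B (f a) xb" using aA(4) by blast
      have cB: "cint B 1 \<in> dom B" using fd[OF cA(2)] fc1 by simp
      show ?thesis using tr[rule_format, OF fd[OF aA(1)] xb(1) cB nfa xb(2) cs(2) lx xb(4)] .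
    qed
    then have "lt A a (cint A 1)" using ltiff[OF aA(1) cA(2)] fc1 by simp
    moreover have "\<not> (\<not>lt A a a \<and> (lt A (cint A 0) a \<or> cint A 0 = a) \<and> lt A a (cint A 1) \<and> (\<forall>y\<in>dom A. \<not>lt A y y \<longrightarrow> \<not> sr A a y))"
      using H aA(1) by blast
    ultimately obtain y0 where y0: "y0 \<in> dom A" "\<not> lt A y0 y0" "sr A a y0" using aA(2,3) by blast
    have fy0: "f y0 \<in> dom B" "\<not> lt B (f y0) (f y0)" "sr B (f a) (f y0)"
      using y0 fd ltiff[OF y0(1) y0(1)] sriff[OF aA(1) y0(1)] by auto
    have succ: "lt B (f a) (f y0)" "\<forall>z\<in>dom B. \<not> lt B z z \<longrightarrow> \<not>(lt B (f a) z \<and> lt B z (f y0))"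
      using sc[rule_format, OF fd[OF aA(1)] fy0(1) _ nfa fy0(2) _ fy0(3)] xb(1,2) by (blast, blast)
    have lay0: "lt A a y0" using succ(1) ltiff[OF aA(1) y0(1)] by simp
    have c0y0: "lt A (cint A 0) y0"
    proof (cases "cint A 0 = a")
      case True then show ?thesis using lay0 by simp
    next
      case False
      then have "lt A (cint A 0) a" using aA(3) by blast
      then show ?thesis using p3[rule_format, OF cA(1) aA(1) y0(1) _ aA(2) y0(2) _ lay0] p5 by blast
    qed
    show False
    proof (cases "f a = xb")
      case True
      then show ?thesis using xb(5) fy0 by blast
    next
      case False
      then have lax: "lt B (f a) xb" using aA(4) by blast
      have "lt B xb (f y0) \<or> lt B (f y0) xb \<or> xb = f y0" using lin[rule_format, OF xb(1) fy0(1) xb(2) fy0(2)] .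
      moreover have "\<not> lt B xb (f y0)" using succ(2) xb(1,2) lax by blast
      ultimately have "lt B (f y0) xb \<or> f y0 = xb" by blast
      then have "y0 \<in> Y" using y0 c0y0 unfolding Y_def by blast
      then show False using a(2) lay0 by blast
    qed
  qed
  have "G2 A" using p2 unfolding G2_def .
  moreover have "G3 A" using p3 unfolding G3_def .
  moreover have "G4 A" using p4 unfolding G4_def .
  moreover have "G5 A" using p5 unfolding G5_def .
  moreover have "G6 A" using p6 unfolding G6_def .
  ultimately show ?thesis unfolding Gsem_def using p1 by blast
qed



definition SA :: "nat \<Rightarrow> nat strc" where
 "SA N = \<lparr>dom = {0..N}, cint = (\<lambda>c. if c = 0 then 1 else N),
   rint = (\<lambda>R. if R = (0,2) then {[x,y] | x y. x \<le> N \<and> y \<le> N \<and> (x = 0 \<or> y = 0 \<or> x < y)}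
     else if R = (1,2) then {[x,y] | x y. x \<le> N \<and> y \<le> N \<and> (x = 0 \<or> y = 0 \<or> y = Suc x)} else {})\<rparr>"

definition SB :: "nat \<Rightarrow> nat strc" where
 "SB N = \<lparr>dom = {0..2*N}, cint = (\<lambda>c. if c = 0 then 1 else 2*N),
   rint = (\<lambda>R. if R = (0,2) then {[x,y] | x y. x \<le> 2*N \<and> y \<le> 2*N \<and> (x = 0 \<or> y = 0 \<or> x < y)}
     else if R = (1,2) then {[x,y] | x y. x \<le> 2*N \<and> y \<le> 2*N \<and> (x = 0 \<or> y = 0 \<or> (y = Suc x \<and> x \<noteq> N))} else {})\<rparr>"

lemma ltA: "lt (SA N) x y \<longleftrightarrow> x \<le> N \<and> y \<le> N \<and> (x = 0 \<or> y = 0 \<or> x < y)" by (simp add: SA_def)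
lemma srA: "sr (SA N) x y \<longleftrightarrow> x \<le> N \<and> y \<le> N \<and> (x = 0 \<or> y = 0 \<or> y = Suc x)" by (simp add: SA_def)
lemma ltB: "lt (SB N) x y \<longleftrightarrow> x \<le> 2*N \<and> y \<le> 2*N \<and> (x = 0 \<or> y = 0 \<or> x < y)" by (simp add: SB_def)
lemma srB: "sr (SB N) x y \<longleftrightarrow> x \<le> 2*N \<and> y \<le> 2*N \<and> (x = 0 \<or> y = 0 \<or> (y = Suc x \<and> x \<noteq> N))" by (simp add: SB_def)
lemma domA: "dom (SA N) = {0..N}" by (simp add: SA_def)
lemma domB: "dom (SB N) = {0..2*N}" by (simp add: SB_def)
lemma cA0: "cint (SA N) 0 = 1" and cA1: "cint (SA N) 1 = N" by (simp_all add: SA_def)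
lemma cB0: "cint (SB N) 0 = 1" and cB1: "cint (SB N) 1 = 2*N" by (simp_all add: SB_def)
lemma rA: "t \<in> rint (SA N) (0,2) \<or> t \<in> rint (SA N) (1,2) \<Longrightarrow> \<exists>x y. t = [x,y] \<and> x \<le> N \<and> y \<le> N" by (auto simp: SA_def)
lemma rB: "t \<in> rint (SB N) (0,2) \<or> t \<in> rint (SB N) (1,2) \<Longrightarrow> \<exists>x y. t = [x,y] \<and> x \<le> 2*N \<and> y \<le> 2*N" by (auto simp: SB_def)

lemma struct_A: "1 \<le> N \<Longrightarrow> is_struct \<tau>0 (SA N)"
  unfolding is_struct_def \<tau>0_def SA_def by auto

lemma struct_B: "1 \<le> N \<Longrightarrow> is_struct \<tau>0 (SB N)"
  unfolding is_struct_def \<tau>0_def SB_def by auto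

lemma Gsem_B: "1 \<le> N \<Longrightarrow> Gsem (SB N)"
proof -
  assume N: "1 \<le> N"
  have "G1 (SB N)" unfolding G1_def ltB srB domB by (intro bexI[of _ 0]) auto
  moreover have "G2 (SB N)" unfolding G2_def ltB srB domB by auto
  moreover have "G3 (SB N)" unfolding G3_def ltB srB domB by auto
  moreover have "G4 (SB N)" unfolding G4_def ltB srB domB by auto
  moreover have "G5 (SB N)" unfolding G5_def ltB srB domB cB0 cB1 using N by auto
  moreover have "G6 (SB N)" unfolding G6_def ltB srB domB cB0 cB1 using N by (intro bexI[of _ N]) auto
  ultimately show ?thesis unfolding Gsem_def by blast
qed

lemma not_Gsem_A: "\<not> Gsem (SA N)"
proof
  assume "Gsem (SA N)"
  then have "G6 (SA N)" unfolding Gsem_def by blast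
  then obtain x where x: "x \<le> N" "x \<noteq> 0" "x < N" "\<forall>y\<in>{0..N}. y \<noteq> 0 \<longrightarrow> \<not> sr (SA N) x y"
    unfolding G6_def ltA domA cA0 cA1 by auto
  have "Suc x \<in> {0..N}" using x by auto
  then show False using x(4) x(3) srA by auto
qed

lemma is_homI:
  assumes "\<forall>a\<in>dom A. h a \<in> dom B" "h (cint A 0) = cint B 0" "h (cint A 1) = cint B 1"
    "\<forall>t\<in>rint A (0,2). \<exists>x y. t = [x,y]" "\<forall>t\<in>rint A (1,2). \<exists>x y. t = [x,y]"
    "\<forall>x y. lt A x y \<longrightarrow> lt B (h x) (h y)" "\<forall>x y. sr A x y \<longrightarrow> sr B (h x) (h y)"
  shows "is_hom \<tau>0 A B h"
proof -
  have "\<forall>t\<in>rint A (0,2). map h t \<in> rint B (0,2)" using assms(4,6) by fastforce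
  moreover have "\<forall>t\<in>rint A (1,2). map h t \<in> rint B (1,2)" using assms(5,7) by fastforce
  ultimately show ?thesis unfolding is_hom_def \<tau>0_def using assms(1,2,3) by auto
qed

lemma hole:
  assumes "length as \<le> n" "N = n + 5"
  shows "\<exists>m. 2 \<le> m \<and> m < N \<and> m \<notin> insert 1 (insert N (set as))"
proof (rule ccontr)
  assume "\<not> ?thesis"
  then have "{2..<N} \<subseteq> insert 1 (insert N (set as))" by auto
  then have "card {2..<N} \<le> card (insert 1 (insert N (set as)))" by (intro card_mono) auto
  also have "\<dots> \<le> Suc (Suc (card (set as)))" by (simp add: card_insert_if)
  also have "\<dots> \<le> Suc (Suc (length as))" by (simp add: card_length)
  finally show False using assms by simp
qed

lemma loc_AB:
  assumes N: "N = n + 5"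
  shows "loc \<tau>0 (SA N) (SB N) n"
  unfolding loc_def
proof (intro allI impI)
  fix as assume as: "set as \<subseteq> dom (SA N) \<and> length as \<le> n"
  define T where "T = insert 1 (insert N (set as))"
  obtain m where m: "2 \<le> m" "m < N" "m \<notin> T" using hole[of as n N] as N unfolding T_def by blast
  have T1: "1 \<in> T" and TN: "N \<in> T" and Tas: "set as \<subseteq> T" unfolding T_def by auto
  define f where "f x = (if x \<in> T \<and> 1 \<le> x \<and> x < m then x else if x \<in> T \<and> m < x then x + N else 0)" for x
  define g where "g y = (if 1 \<le> y \<and> y < m \<and> y \<in> T then y else if N + m < y \<and> y - N \<in> T then y - N else 0)" for y
  have mT: "\<And>x. x \<in> T \<Longrightarrow> x \<noteq> m" using m(3) by auto
  have hf: "is_hom \<tau>0 (SA N) (SB N) f"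
  proof (rule is_homI)
    show "\<forall>a\<in>dom (SA N). f a \<in> dom (SB N)" unfolding domA domB f_def by auto
    show "f (cint (SA N) 0) = cint (SB N) 0" unfolding cA0 cB0 f_def using T1 m by auto
    show "f (cint (SA N) 1) = cint (SB N) 1" unfolding cA1 cB1 f_def using TN m by auto
    show "\<forall>t\<in>rint (SA N) (0,2). \<exists>x y. t = [x,y]" using rA by blast
    show "\<forall>t\<in>rint (SA N) (1,2). \<exists>x y. t = [x,y]" using rA by blast
    show "\<forall>x y. lt (SA N) x y \<longrightarrow> lt (SB N) (f x) (f y)" unfolding ltA ltB f_def by auto
    show "\<forall>x y. sr (SA N) x y \<longrightarrow> sr (SB N) (f x) (f y)" unfolding srA srB f_def using mT m by auto
  qed
  have hg: "is_hom \<tau>0 (SB N) (SA N) g"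
  proof (rule is_homI)
    show "\<forall>a\<in>dom (SB N). g a \<in> dom (SA N)" unfolding domA domB g_def using m by auto
    show "g (cint (SB N) 0) = cint (SA N) 0" unfolding cA0 cB0 g_def using T1 m by auto
    show "g (cint (SB N) 1) = cint (SA N) 1" unfolding cA1 cB1 g_def using TN m by auto
    show "\<forall>t\<in>rint (SB N) (0,2). \<exists>x y. t = [x,y]" using rB by blast
    show "\<forall>t\<in>rint (SB N) (1,2). \<exists>x y. t = [x,y]" using rB by blast
    show "\<forall>x y. lt (SB N) x y \<longrightarrow> lt (SA N) (g x) (g y)" unfolding ltA ltB g_def using m by auto
    show "\<forall>x y. sr (SB N) x y \<longrightarrow> sr (SA N) (g x) (g y)" unfolding srA srB g_def using mT m by auto
  qed
  have gfx: "\<And>x. x \<in> T \<Longrightarrow> g (f x) = x" unfolding f_def g_def using mT by auto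
  have "map g (map f as) = as" using gfx Tas by (induction as) auto
  then show "\<exists>bs. hom_exp \<tau>0 (SA N) as (SB N) bs \<and> hom_exp \<tau>0 (SB N) bs (SA N) as"
    using hf hg unfolding hom_exp_iff by blast
qed


lemma gd_bound:
  assumes "finite \<Sigma>" "\<forall>\<gamma>\<in>\<Sigma>. is_gd \<tau> \<gamma>"
  shows "\<exists>n. \<forall>\<gamma>\<in>\<Sigma>. \<exists>xs body ys heads. (\<forall>a\<in>set body. is_atom a) \<and> (\<forall>h\<in>set heads. \<forall>a\<in>set h. is_atom a) \<and>
        \<gamma> = foldr All xs (Imp (conjs body) (foldr Ex ys (disjs (map conjs heads)))) \<and> length xs \<le> n"
  using assms
proof (induction \<Sigma> rule: finite_induct)
  case empty then show ?case by simp
next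
  case (insert x F)
  obtain n where n: "\<forall>\<gamma>\<in>F. \<exists>xs body ys heads. (\<forall>a\<in>set body. is_atom a) \<and> (\<forall>h\<in>set heads. \<forall>a\<in>set h. is_atom a) \<and>
        \<gamma> = foldr All xs (Imp (conjs body) (foldr Ex ys (disjs (map conjs heads)))) \<and> length xs \<le> n"
    using insert.IH insert.prems by blast
  obtain xs body ys heads where x: "(\<forall>a\<in>set body. is_atom a) \<and> (\<forall>h\<in>set heads. \<forall>a\<in>set h. is_atom a) \<and>
        x = foldr All xs (Imp (conjs body) (foldr Ex ys (disjs (map conjs heads))))"
    using insert.prems unfolding is_gd_def by blast
  define k where "k = max n (length xs)"
  have "\<forall>\<gamma>\<in>insert x F. \<exists>xs body ys heads. (\<forall>a\<in>set body. is_atom a) \<and> (\<forall>h\<in>set heads. \<forall>a\<in>set h. is_atom a) \<and>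
        \<gamma> = foldr All xs (Imp (conjs body) (foldr Ex ys (disjs (map conjs heads)))) \<and> length xs \<le> k"
  proof
    fix \<gamma> assume "\<gamma> \<in> insert x F"
    then show "\<exists>xs' body ys heads. (\<forall>a\<in>set body. is_atom a) \<and> (\<forall>h\<in>set heads. \<forall>a\<in>set h. is_atom a) \<and>
        \<gamma> = foldr All xs' (Imp (conjs body) (foldr Ex ys (disjs (map conjs heads)))) \<and> length xs' \<le> k"
    proof
      assume "\<gamma> = x" then show ?thesis using x unfolding k_def by (intro exI[of _ xs] exI[of _ body] exI[of _ ys] exI[of _ heads]) auto
    next
      assume "\<gamma> \<in> F"
      then obtain xs' body ys heads where "(\<forall>a\<in>set body. is_atom a) \<and> (\<forall>h\<in>set heads. \<forall>a\<in>set h. is_atom a) \<and>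
        \<gamma> = foldr All xs' (Imp (conjs body) (foldr Ex ys (disjs (map conjs heads)))) \<and> length xs' \<le> n"
        using n by blast
      then show ?thesis unfolding k_def by (intro exI[of _ xs'] exI[of _ body] exI[of _ ys] exI[of _ heads]) auto
    qed
  qed
  then show ?case by blast
qed

theorem theorem2:
  shows "\<exists>(\<tau>::sig) \<phi>. finite (cnsts \<tau>) \<and> finite (rels \<tau>) \<and> sentence \<tau> \<phi>
    \<and> (\<forall>(A :: nat strc) (B :: nat strc). is_struct \<tau> A \<and> finite (dom A) \<and> is_struct \<tau> B \<and> finite (dom B)
          \<and> glob_hom \<tau> A B \<and> models B \<phi> \<longrightarrow> models A \<phi>)
    \<and> \<not> (\<exists>\<Sigma>. finite \<Sigma> \<and> (\<forall>\<gamma>\<in>\<Sigma>. is_gd \<tau> \<gamma>)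
          \<and> (\<forall>A :: nat strc. is_struct \<tau> A \<and> finite (dom A) \<longrightarrow>
               (models A \<phi> \<longleftrightarrow> (\<forall>\<gamma>\<in>\<Sigma>. models A \<gamma>))))"
proof (intro exI[of _ \<tau>0] exI[of _ GF] conjI)
  show "finite (cnsts \<tau>0)" "finite (rels \<tau>0)" by (simp_all add: \<tau>0_def)
  show "sentence \<tau>0 GF" by (rule GF_sentence)
  show "\<forall>(A :: nat strc) (B :: nat strc). is_struct \<tau>0 A \<and> finite (dom A) \<and> is_struct \<tau>0 B \<and> finite (dom B)
          \<and> glob_hom \<tau>0 A B \<and> models B GF \<longrightarrow> models A GF"
    using pres unfolding GF_sem by blast
  show "\<not> (\<exists>\<Sigma>. finite \<Sigma> \<and> (\<forall>\<gamma>\<in>\<Sigma>. is_gd \<tau>0 \<gamma>)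
          \<and> (\<forall>A :: nat strc. is_struct \<tau>0 A \<and> finite (dom A) \<longrightarrow>
               (models A GF \<longleftrightarrow> (\<forall>\<gamma>\<in>\<Sigma>. models A \<gamma>))))"
  proof
    assume "\<exists>\<Sigma>. finite \<Sigma> \<and> (\<forall>\<gamma>\<in>\<Sigma>. is_gd \<tau>0 \<gamma>)
          \<and> (\<forall>A :: nat strc. is_struct \<tau>0 A \<and> finite (dom A) \<longrightarrow>
               (models A GF \<longleftrightarrow> (\<forall>\<gamma>\<in>\<Sigma>. models A \<gamma>)))"
    then obtain \<Sigma> where S: "finite \<Sigma>" "\<forall>\<gamma>\<in>\<Sigma>. is_gd \<tau>0 \<gamma>"
      and eqv: "\<forall>A :: nat strc. is_struct \<tau>0 A \<and> finite (dom A) \<longrightarrow> (models A GF \<longleftrightarrow> (\<forall>\<gamma>\<in>\<Sigma>. models A \<gamma>))"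
      by blast
    obtain n where n: "\<forall>\<gamma>\<in>\<Sigma>. \<exists>xs body ys heads. (\<forall>a\<in>set body. is_atom a) \<and> (\<forall>h\<in>set heads. \<forall>a\<in>set h. is_atom a) \<and>
        \<gamma> = foldr All xs (Imp (conjs body) (foldr Ex ys (disjs (map conjs heads)))) \<and> length xs \<le> n"
      using gd_bound[OF S] by blast
    define N where "N = n + 5"
    have N1: "1 \<le> N" unfolding N_def by simp
    have fA: "finite (dom (SA N))" and fB: "finite (dom (SB N))" by (simp_all add: domA domB)
    have "models (SB N) GF" using Gsem_B[OF N1] GF_sem by blast
    then have mB: "\<forall>\<gamma>\<in>\<Sigma>. models (SB N) \<gamma>" using eqv struct_B[OF N1] fB by blast
    have lc: "loc \<tau>0 (SA N) (SB N) n" using loc_AB N_def by blast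
    have "\<forall>\<gamma>\<in>\<Sigma>. models (SA N) \<gamma>"
    proof
      fix \<gamma> assume g: "\<gamma> \<in> \<Sigma>"
      then obtain xs body ys heads where h: "(\<forall>a\<in>set body. is_atom a)" "(\<forall>h\<in>set heads. \<forall>a\<in>set h. is_atom a)"
        "\<gamma> = foldr All xs (Imp (conjs body) (foldr Ex ys (disjs (map conjs heads))))" "length xs \<le> n"
        using n by blast
      have "sentence \<tau>0 \<gamma>" using S(2) g unfolding is_gd_def by blast
      then show "models (SA N) \<gamma>" using gd_pres[OF _ h(1) h(2) h(3) h(4) lc] mB g by blast
    qed
    then have "models (SA N) GF" using eqv struct_A[OF N1] fA by blast
    then show False using not_Gsem_A GF_sem by blast
  qed
qed

end
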